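(* Let $\mathfrak{A}$ be an atomic weakly associative relation algebra, let $\mathfrak{B}=\langle B,T_\kappa,E_{\kappa\lambda}\rangle_{\kappa,\lambda<3}$ be its suitable structure, and let $t=\langle t_0,t_1,t_2\rangle\in B$. Then (i) $E_{10}\cap T^*_0\{t\}=\{\langle t_0,t_0,t_0^{\mathsf d}\rangle\}$, (ii) $E_{01}\cap T^*_1\{t\}=\{\langle t_1,t_1,t_1^{\mathsf d}\rangle\}$, (iii) $E_{12}\cap T^*_2\{t\}=\{\langle t_2^{\mathsf r},t_2,t_2\rangle\}$, (iv) $E_{21}\cap T^*_1\{t\}=\{\langle t_1^{\mathsf r},t_1,t_1\rangle\}$, (v) $E_{02}\cap T^*_2\{t\}=\{\langle \breve{t_2},t_2^{\mathsf d},t_2\rangle\}$, (vi) $E_{20}\cap T^*_0\{t\}=\{\langle t_0,t_0^{\mathsf r},\breve{t_0}\rangle\}$.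
   Context: WA: algebras $\langle A,+,\overline{\phantom{x}},;,\breve{\phantom{x}},1'\rangle$ with $x\cdot y=\overline{\overline{x}+\overline{y}}$, $0'=\overline{1'}$, $1=1'+0'$, $0=\overline{1}$, satisfying for all $x,y,z$: $x+y=y+x$; $x+(y+z)=(x+y)+z$; $\overline{\overline{x}+\overline{y}}+\overline{\overline{x}+y}=x$; $((x\cdot 1');1);1=(x\cdot1');1$; $(x+y);z=x;z+y;z$; $x;1'=x$; $\breve{\breve{x}}=x$; $\breve{(x+y)}=\breve{x}+\breve{y}$; $\breve{(x;y)}=\breve{y};\breve{x}$; $\breve{x};\overline{x;y}+\overline{y}=\overline{y}$. Domain and range: $x^{\mathsf d}=(x;\breve{x})\cdot1'$, $x^{\mathsf r}=(\breve{x};x)\cdot1'$. Suitable structure: $B=\{s\in{}^3\mathrm{At}(\mathfrak{A}): s_2;s_0\ge s_1\}$; $T_\kappa=\{\langle s,t\rangle\in B\times B:s_\kappa=t_\kappa\}$; $E_{\kappa\kappa}=B$; for distinct $\kappa,\lambda$ with third index $\mu$, $E_{\kappa\lambda}=\{s\in B:s_\mu\le1'\}$. $T^*_\kappa(X)=\{y\in B:\exists x\in X\ \langle y,x\rangle\in T_\kappa\}$. *)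

theory Defs
  imports Main
begin

text \<open>An algebra of relation-algebra type, with carrier the whole type 'a:
  Boolean join +, complement, relative composition ;, converse, identity 1'.\<close>
record 'a ra =
  radd :: "'a \<Rightarrow> 'a \<Rightarrow> 'a"
  rcompl :: "'a \<Rightarrow> 'a"
  rcomp :: "'a \<Rightarrow> 'a \<Rightarrow> 'a"
  rconv :: "'a \<Rightarrow> 'a"
  rid :: 'a

definition rmeet :: "'a ra \<Rightarrow> 'a \<Rightarrow> 'a \<Rightarrow> 'a" where
  "rmeet A x y = rcompl A (radd A (rcompl A x) (rcompl A y))"

definition rdiv :: "'a ra \<Rightarrow> 'a" where
  "rdiv A = rcompl A (rid A)"

definition rtop :: "'a ra \<Rightarrow> 'a" where
  "rtop A = radd A (rid A) (rdiv A)"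

definition rbot :: "'a ra \<Rightarrow> 'a" where
  "rbot A = rcompl A (rtop A)"

definition rle :: "'a ra \<Rightarrow> 'a \<Rightarrow> 'a \<Rightarrow> bool" where
  "rle A x y \<longleftrightarrow> radd A x y = y"

definition WA :: "'a ra \<Rightarrow> bool" where
  "WA A \<longleftrightarrow>
     (\<forall>x y. radd A x y = radd A y x) \<and>
     (\<forall>x y z. radd A x (radd A y z) = radd A (radd A x y) z) \<and>
     (\<forall>x y. radd A (rcompl A (radd A (rcompl A x) (rcompl A y)))
                    (rcompl A (radd A (rcompl A x) y)) = x) \<and>
     (\<forall>x. rcomp A (rcomp A (rmeet A x (rid A)) (rtop A)) (rtop A)
            = rcomp A (rmeet A x (rid A)) (rtop A)) \<and>
     (\<forall>x y z. rcomp A (radd A x y) z = radd A (rcomp A x z) (rcomp A y z)) \<and>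
     (\<forall>x. rcomp A x (rid A) = x) \<and>
     (\<forall>x. rconv A (rconv A x) = x) \<and>
     (\<forall>x y. rconv A (radd A x y) = radd A (rconv A x) (rconv A y)) \<and>
     (\<forall>x y. rconv A (rcomp A x y) = rcomp A (rconv A y) (rconv A x)) \<and>
     (\<forall>x y. radd A (rcomp A (rconv A x) (rcompl A (rcomp A x y))) (rcompl A y)
              = rcompl A y)"

definition ra_atom :: "'a ra \<Rightarrow> 'a \<Rightarrow> bool" where
  "ra_atom A a \<longleftrightarrow> a \<noteq> rbot A \<and> (\<forall>y. rle A y a \<longrightarrow> y = rbot A \<or> y = a)"

definition At :: "'a ra \<Rightarrow> 'a set" where
  "At A = {a. ra_atom A a}"

definition ra_atomic :: "'a ra \<Rightarrow> bool" where
  "ra_atomic A \<longleftrightarrow> (\<forall>x. x \<noteq> rbot A \<longrightarrow> (\<exists>a\<in>At A. rle A a x))"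

definition rdom :: "'a ra \<Rightarrow> 'a \<Rightarrow> 'a" where
  "rdom A x = rmeet A (rcomp A x (rconv A x)) (rid A)"

definition rran :: "'a ra \<Rightarrow> 'a \<Rightarrow> 'a" where
  "rran A x = rmeet A (rcomp A (rconv A x) x) (rid A)"

definition sel :: "nat \<Rightarrow> 'a \<times> 'a \<times> 'a \<Rightarrow> 'a" where
  "sel k s = (if k = 0 then fst s else if k = 1 then fst (snd s) else snd (snd s))"

definition suitB :: "'a ra \<Rightarrow> ('a \<times> 'a \<times> 'a) set" where
  "suitB A = {(s0, s1, s2). s0 \<in> At A \<and> s1 \<in> At A \<and> s2 \<in> At A \<and>
                            rle A s1 (rcomp A s2 s0)}"

definition suitT :: "'a ra \<Rightarrow> nat \<Rightarrow> (('a \<times> 'a \<times> 'a) \<times> ('a \<times> 'a \<times> 'a)) set" where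
  "suitT A k = {(s, t). s \<in> suitB A \<and> t \<in> suitB A \<and> sel k s = sel k t}"

definition suitE :: "'a ra \<Rightarrow> nat \<Rightarrow> nat \<Rightarrow> ('a \<times> 'a \<times> 'a) set" where
  "suitE A k l = (if k = l then suitB A
                  else {s \<in> suitB A. rle A (sel (3 - k - l) s) (rid A)})"

definition Tstar :: "'a ra \<Rightarrow> nat \<Rightarrow> ('a \<times> 'a \<times> 'a) set \<Rightarrow> ('a \<times> 'a \<times> 'a) set" where
  "Tstar A k X = {y \<in> suitB A. \<exists>x\<in>X. (y, x) \<in> suitT A k}"

end

theory Submission
  imports Defs
begin

locale hb =
  fixes p :: "'a \<Rightarrow> 'a \<Rightarrow> 'a" (infixl "\<oplus>" 65) and n :: "'a \<Rightarrow> 'a"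
    and m :: "'a \<Rightarrow> 'a \<Rightarrow> 'a" and le :: "'a \<Rightarrow> 'a \<Rightarrow> bool"
    and e :: 'a and c :: 'a and b :: 'a
  assumes comm: "x \<oplus> y = y \<oplus> x"
  and assoc: "x \<oplus> (y \<oplus> z) = (x \<oplus> y) \<oplus> z"
  and hunt: "n (n x \<oplus> n y) \<oplus> n (n x \<oplus> y) = x"
  and m_def: "m x y = n (n x \<oplus> n y)"
  and le_def: "le x y \<longleftrightarrow> x \<oplus> y = y"
  and c_def: "c = e \<oplus> n e"
  and b_def: "b = n c"
begin

lemma L0: "x \<oplus> n x = n x \<oplus> n (n x)"
  using comm assoc hunt by (smt (verit))

lemma L1: "n (n x) = x"
  using comm assoc hunt L0 by (smt (verit))

lemma L2: "x \<oplus> n x = y \<oplus> n y"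
proof -
  have f1: "\<forall>a aa ab. a \<oplus> (ab \<oplus> aa) = aa \<oplus> (a \<oplus> ab)"
    by (metis (no_types) assoc comm)
  have f2: "\<forall>a aa. n (aa \<oplus> a) \<oplus> n (aa \<oplus> n a) = n aa"
    by (metis L1 hunt)
  have f3: "\<forall>a aa ab. ab \<oplus> (aa \<oplus> a) = a \<oplus> (aa \<oplus> ab)"
    using f1 comm by auto
  have "\<forall>a aa. n (aa \<oplus> a) \<oplus> n (n a \<oplus> aa) = n aa"
    using f2 comm by fastforce
  then have f4: "\<forall>a aa. n (a \<oplus> aa) \<oplus> n (n a \<oplus> aa) = n aa"
    by (simp add: comm)
  have "\<forall>a aa. a \<oplus> n (n aa \<oplus> a) = aa \<oplus> n (n a \<oplus> aa)"
    using f3 f2 f1 by (smt (verit) L1 comm)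
  then show ?thesis
    using f4 f3 f1 by (smt (verit))
qed

lemma L3: "x \<oplus> x = x"
proof -
  have c: "\<And>x. x \<oplus> n x = c" using L2 c_def by metis
  have nb: "n b = c" by (simp add: b_def L1)
  have s1: "c \<oplus> b = c" using c[of c] b_def by simp
  have s2: "b \<oplus> c = c" using s1 comm by metis
  have B: "\<And>x. b \<oplus> n (n x \<oplus> n x) = x"
  proof -
    fix x
    have "n (n x \<oplus> n x) \<oplus> n (n x \<oplus> x) = x" using hunt[of x x] .
    moreover have "n x \<oplus> x = c" using c[of "n x"] L1 by simp
    ultimately show "b \<oplus> n (n x \<oplus> n x) = x" using b_def comm by metis
  qed
  define g where "g = n (c \<oplus> c)"
  have bg: "b \<oplus> g = b" using B[of b] nb g_def by simp
  have "c = g \<oplus> (c \<oplus> c)" using c[of g] g_def L1 by simp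
  moreover have "g \<oplus> c = c"
  proof -
    have "g \<oplus> c = g \<oplus> (b \<oplus> c)" using s2 by simp
    also have "\<dots> = (b \<oplus> g) \<oplus> c" using assoc comm by metis
    finally show ?thesis using bg s2 by simp
  qed
  ultimately have s3: "c \<oplus> c = c" by (metis assoc)
  have "n (n b \<oplus> n b) \<oplus> n (n b \<oplus> b) = b" using hunt[of b b] .
  hence s4: "b \<oplus> b = b" using nb s3 s1 b_def by simp
  have z: "x \<oplus> b = x" for x
    by (metis B s4 assoc comm)
  have h: "n (n y \<oplus> n y) = y" for y using B[of y] z[of "n (n y \<oplus> n y)"] comm by metis
  have "n (x \<oplus> x) = n x" using h[of "n x"] L1 by simp
  hence "n (n (x \<oplus> x)) = x" using L1 by simp
  thus ?thesis using L1 by simp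
qed

lemma ac: "x \<oplus> y = y \<oplus> x" "x \<oplus> (y \<oplus> z) = (x \<oplus> y) \<oplus> z" "x \<oplus> (y \<oplus> z) = y \<oplus> (x \<oplus> z)"
proof -
  show "x \<oplus> y = y \<oplus> x" by (rule comm)
  show "x \<oplus> (y \<oplus> z) = (x \<oplus> y) \<oplus> z" by (rule assoc)
  have "x \<oplus> (y \<oplus> z) = (x \<oplus> y) \<oplus> z" by (rule assoc)
  also have "\<dots> = (y \<oplus> x) \<oplus> z" by (simp only: comm[of x y])
  also have "\<dots> = y \<oplus> (x \<oplus> z)" by (rule assoc[symmetric])
  finally show "x \<oplus> (y \<oplus> z) = y \<oplus> (x \<oplus> z)" .
qed

lemma L4: "x \<oplus> n x = c"
  using L2[of x e] c_def by simp

lemma L5: "x \<oplus> c = c"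
proof -
  have "x \<oplus> c = x \<oplus> (x \<oplus> n x)" by (simp add: L4)
  also have "\<dots> = (x \<oplus> x) \<oplus> n x" by (rule assoc)
  finally show ?thesis by (simp add: L3 L4)
qed

lemma L6: "x \<oplus> b = x"
proof -
  have "n (n x \<oplus> n x) \<oplus> n (n x \<oplus> x) = x" by (rule hunt)
  thus ?thesis by (simp add: L3 L1 b_def comm L4)
qed

lemma mH: "m x y \<oplus> m x (n y) = x"
  using hunt by (simp add: m_def L1)

lemma m_comm: "m x y = m y x" by (simp add: m_def comm)
lemma m_assoc: "m x (m y z) = m (m x y) z" by (simp add: m_def L1 assoc)

lemma absorb1: "x \<oplus> m x y = x"
proof -
  have "x \<oplus> m x y = (m x y \<oplus> m x (n y)) \<oplus> m x y" by (simp only: mH)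
  also have "\<dots> = (m x (n y) \<oplus> m x y) \<oplus> m x y" by (simp only: comm[of "m x y" "m x (n y)"])
  also have "\<dots> = m x (n y) \<oplus> (m x y \<oplus> m x y)" by (rule assoc[symmetric])
  also have "\<dots> = m x (n y) \<oplus> m x y" by (simp only: L3)
  also have "\<dots> = x" using mH[of x y] comm[of "m x y" "m x (n y)"] by simp
  finally show ?thesis .
qed

lemma n_join: "n (x \<oplus> y) = m (n x) (n y)" by (simp add: m_def L1)
lemma n_meet: "n (m x y) = n x \<oplus> n y" by (simp add: m_def L1)

lemma absorb2: "m x (x \<oplus> y) = x"
proof -
  have "n x \<oplus> n (x \<oplus> y) = n x" by (simp add: n_join absorb1)
  thus ?thesis by (simp add: m_def L1)
qed

lemma le_meet: "le x y \<longleftrightarrow> m x y = x"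
proof
  assume "le x y" hence "x \<oplus> y = y" by (simp add: le_def)
  hence "m x y = m x (x \<oplus> y)" by simp
  thus "m x y = x" by (simp add: absorb2)
next
  assume h: "m x y = x"
  have "y \<oplus> m y x = m x y \<oplus> y" using comm[of y "m y x"] m_comm[of y x] by simp
  hence "x \<oplus> y = y \<oplus> m y x" using h by simp
  thus "le x y" by (simp add: le_def absorb1)
qed

lemma m_idem: "m x x = x" by (simp add: m_def L3 L1)

lemma le_refl: "le x x" by (simp add: le_def L3)
lemma le_trans: "le x y \<Longrightarrow> le y z \<Longrightarrow> le x z"
  unfolding le_def by (metis assoc)
lemma le_antisym: "le x y \<Longrightarrow> le y x \<Longrightarrow> x = y" unfolding le_def by (metis comm)
lemma join_ge1: "le x (x \<oplus> y)" unfolding le_def by (simp add: assoc L3)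
lemma join_ge2: "le y (x \<oplus> y)" using join_ge1[of y x] by (simp add: comm)
lemma join_least: "le x z \<Longrightarrow> le y z \<Longrightarrow> le (x \<oplus> y) z"
  unfolding le_def by (metis assoc)
lemma meet_le1: "le (m x y) x" unfolding le_def by (simp add: comm absorb1)
lemma meet_le2: "le (m x y) y" using meet_le1[of y x] by (simp add: m_comm)
lemma meet_greatest: "le x y \<Longrightarrow> le x z \<Longrightarrow> le x (m y z)"
  unfolding le_meet by (metis m_assoc)
lemma n_anti: "le x y \<Longrightarrow> le (n y) (n x)"
proof -
  assume "le x y" hence "x \<oplus> y = y" by (simp add: le_def)
  hence "n y = m (n x) (n y)" by (metis n_join)
  thus ?thesis by (simp add: le_meet m_comm)
qed
lemma meet_compl: "m x (n x) = b" by (simp add: m_def L1 b_def L4 comm)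
lemma join_compl: "x \<oplus> n x = c" by (rule L4)
lemma b_least: "le b x" unfolding le_def using L6[of x] comm[of b x] by simp
lemma c_greatest: "le x c" by (simp add: le_def L5)
lemma meet_c: "m x c = x" using c_greatest le_meet by blast
lemma key: "m x (n y) = b \<Longrightarrow> le x y"
proof -
  assume "m x (n y) = b"
  hence "x = m x y" using mH[of x y] L6 by simp
  thus ?thesis by (simp add: le_meet)
qed

lemma distrib_le: "le (m x (y \<oplus> z)) (m x y \<oplus> m x z)"
proof -
  let ?w = "m x y \<oplus> m x z"
  let ?u = "m (m x (y \<oplus> z)) (n ?w)"
  have uy: "le ?u (n y)"
  proof (rule key)
    have "le (m ?u y) (m x y)" by (rule meet_greatest[OF le_trans[OF meet_le1 le_trans[OF meet_le1 meet_le1]] meet_le2])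
    hence a: "le (m ?u y) ?w" by (rule le_trans[OF _ join_ge1])
    have "le (m ?u y) (n ?w)" by (rule le_trans[OF meet_le1 meet_le2])
    hence "le (m ?u y) (m ?w (n ?w))" by (rule meet_greatest[OF a])
    hence "le (m ?u (n (n y))) b" by (simp add: meet_compl L1)
    thus "m ?u (n (n y)) = b" by (rule le_antisym[OF _ b_least])
  qed
  have uz: "le ?u (n z)"
  proof (rule key)
    have "le (m ?u z) (m x z)" by (rule meet_greatest[OF le_trans[OF meet_le1 le_trans[OF meet_le1 meet_le1]] meet_le2])
    hence a: "le (m ?u z) ?w" by (rule le_trans[OF _ join_ge2])
    have "le (m ?u z) (n ?w)" by (rule le_trans[OF meet_le1 meet_le2])
    hence "le (m ?u z) (m ?w (n ?w))" by (rule meet_greatest[OF a])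
    hence "le (m ?u (n (n z))) b" by (simp add: meet_compl L1)
    thus "m ?u (n (n z)) = b" by (rule le_antisym[OF _ b_least])
  qed
  have "le ?u (m (n y) (n z))" by (rule meet_greatest[OF uy uz])
  hence "le ?u (n (y \<oplus> z))" by (simp add: n_join)
  moreover have "le ?u (y \<oplus> z)" by (rule le_trans[OF meet_le1 meet_le2])
  ultimately have "le ?u (m (y \<oplus> z) (n (y \<oplus> z)))" by (rule meet_greatest[rotated])
  hence "le ?u b" by (simp add: meet_compl)
  hence "?u = b" by (rule le_antisym[OF _ b_least])
  thus ?thesis by (rule key)
qed

lemma distrib: "m x (y \<oplus> z) = m x y \<oplus> m x z"
proof (rule le_antisym[OF distrib_le])
  show "le (m x y \<oplus> m x z) (m x (y \<oplus> z))"
    by (rule join_least[OF meet_greatest[OF meet_le1 le_trans[OF meet_le2 join_ge1]] meet_greatest[OF meet_le1 le_trans[OF meet_le2 join_ge2]]])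
qed

lemma distrib2: "x \<oplus> m y z = m (x \<oplus> y) (x \<oplus> z)"
proof -
  have "n (x \<oplus> m y z) = m (n x) (n y \<oplus> n z)" by (simp add: n_join n_meet)
  also have "\<dots> = m (n x) (n y) \<oplus> m (n x) (n z)" by (rule distrib)
  also have "\<dots> = n (x \<oplus> y) \<oplus> n (x \<oplus> z)" using n_join by metis
  also have "\<dots> = n (m (x \<oplus> y) (x \<oplus> z))" using n_meet by metis
  finally show ?thesis by (metis L1)
qed

lemma shunt: "m x y = b \<longleftrightarrow> le x (n y)"
proof
  assume "m x y = b"
  hence "m x (n (n y)) = b" by (simp add: L1)
  thus "le x (n y)" by (rule key)
next
  assume h: "le x (n y)"
  have "le (m x y) (m (n y) y)" by (rule meet_greatest[OF le_trans[OF meet_le1 h] meet_le2])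
  hence "le (m x y) b" using meet_compl[of y] m_comm[of y "n y"] by simp
  thus "m x y = b" by (rule le_antisym[OF _ b_least])
qed

lemma bot_unique: "le x b \<Longrightarrow> x = b" by (rule le_antisym[OF _ b_least])
lemma top_unique: "le c x \<Longrightarrow> x = c" by (rule le_antisym[OF c_greatest])
lemma absorb_l: "le x y \<Longrightarrow> m x y = x" by (simp add: le_meet)
lemma absorb_r: "le y x \<Longrightarrow> m x y = y" by (simp add: le_meet m_comm)
lemma le_meetI1: "le a x \<Longrightarrow> le (m a y) x" by (rule le_trans[OF meet_le1])
lemma le_meetI2: "le a x \<Longrightarrow> le (m y a) x" by (rule le_trans[OF meet_le2])

lemma meet_b: "m b x = b" "m x b = b"
  using bot_unique meet_le1 meet_le2 by blast+

declare meet_b[simp] meet_le1[simp] meet_le2[simp] b_least[simp] c_greatest[simp] le_refl[simp] meet_c[simp] m_idem[simp]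
declare le_trans[trans]

end

locale wactx =
  fixes A :: "'a ra"
  assumes wa: "WA A"
begin

abbreviation jn (infixl "\<oplus>" 65) where "x \<oplus> y \<equiv> radd A x y"
abbreviation mt (infixl "\<otimes>" 70) where "x \<otimes> y \<equiv> rmeet A x y"
abbreviation cmp (infixl "\<odot>" 75) where "x \<odot> y \<equiv> rcomp A x y"
abbreviation lq (infix "\<preceq>" 50) where "x \<preceq> y \<equiv> rle A x y"
abbreviation cv where "cv x \<equiv> rconv A x"
abbreviation nc where "nc x \<equiv> rcompl A x"
abbreviation idr where "idr \<equiv> rid A"
abbreviation topr where "topr \<equiv> rtop A"
abbreviation botr where "botr \<equiv> rbot A"

lemmas W = wa[unfolded WA_def]

lemma ax_comm: "x \<oplus> y = y \<oplus> x" using W[THEN conjunct1] by blast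
lemma ax_assoc: "x \<oplus> (y \<oplus> z) = (x \<oplus> y) \<oplus> z" using W[THEN conjunct2, THEN conjunct1] by blast
lemma ax_hunt: "nc (nc x \<oplus> nc y) \<oplus> nc (nc x \<oplus> y) = x" using W[THEN conjunct2, THEN conjunct2, THEN conjunct1] by blast
lemma wassoc: "((x \<otimes> idr) \<odot> topr) \<odot> topr = (x \<otimes> idr) \<odot> topr" using W[THEN conjunct2, THEN conjunct2, THEN conjunct2, THEN conjunct1] by blast
lemma distR: "(x \<oplus> y) \<odot> z = x \<odot> z \<oplus> y \<odot> z" using W[THEN conjunct2, THEN conjunct2, THEN conjunct2, THEN conjunct2, THEN conjunct1] by blast
lemma idR: "x \<odot> idr = x" using W[THEN conjunct2, THEN conjunct2, THEN conjunct2, THEN conjunct2, THEN conjunct2, THEN conjunct1] by blast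
lemma cc: "cv (cv x) = x" using W[THEN conjunct2, THEN conjunct2, THEN conjunct2, THEN conjunct2, THEN conjunct2, THEN conjunct2, THEN conjunct1] by blast
lemma cv_add: "cv (x \<oplus> y) = cv x \<oplus> cv y" using W[THEN conjunct2, THEN conjunct2, THEN conjunct2, THEN conjunct2, THEN conjunct2, THEN conjunct2, THEN conjunct2, THEN conjunct1] by blast
lemma cv_comp: "cv (x \<odot> y) = cv y \<odot> cv x" using W[THEN conjunct2, THEN conjunct2, THEN conjunct2, THEN conjunct2, THEN conjunct2, THEN conjunct2, THEN conjunct2, THEN conjunct2, THEN conjunct1] by blast
lemma schr0: "cv x \<odot> nc (x \<odot> y) \<oplus> nc y = nc y" using W[THEN conjunct2, THEN conjunct2, THEN conjunct2, THEN conjunct2, THEN conjunct2, THEN conjunct2, THEN conjunct2, THEN conjunct2, THEN conjunct2] by blast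

end

sublocale wactx \<subseteq> H: hb "radd A" "rcompl A" "rmeet A" "rle A" "rid A" "rtop A" "rbot A"
  apply unfold_locales
        apply (rule ax_comm)
       apply (rule ax_assoc)
      apply (rule ax_hunt)
     apply (rule rmeet_def)
    apply (rule rle_def)
   apply (simp only: rtop_def rdiv_def)
  apply (rule rbot_def)
  done

context wactx
begin

lemma schr: "cv x \<odot> nc (x \<odot> y) \<preceq> nc y" unfolding rle_def by (rule schr0)

lemma cv_mono: "x \<preceq> y \<Longrightarrow> cv x \<preceq> cv y"
  unfolding rle_def by (metis cv_add)

lemma cv_le_iff: "cv x \<preceq> cv y \<longleftrightarrow> x \<preceq> y"
  using cv_mono[of "cv x" "cv y"] cv_mono[of x y] by (auto simp: cc)

lemma cv_inj: "cv x = cv y \<Longrightarrow> x = y" by (metis cc)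

lemma cv_id: "cv idr = idr"
proof -
  have "cv (cv idr \<odot> idr) = cv idr \<odot> cv (cv idr)" by (rule cv_comp)
  thus ?thesis by (simp add: idR cc)
qed

lemma idL: "idr \<odot> x = x"
proof -
  have "cv (idr \<odot> x) = cv x" by (simp add: cv_comp cv_id idR)
  thus ?thesis by (rule cv_inj)
qed

lemma distL: "x \<odot> (y \<oplus> z) = x \<odot> y \<oplus> x \<odot> z"
proof -
  have "cv (x \<odot> (y \<oplus> z)) = cv (x \<odot> y \<oplus> x \<odot> z)"
    by (simp add: cv_comp cv_add distR)
  thus ?thesis by (rule cv_inj)
qed

lemma monoL: "x \<preceq> y \<Longrightarrow> x \<odot> z \<preceq> y \<odot> z"
  unfolding rle_def by (metis distR)

lemma monoR: "x \<preceq> y \<Longrightarrow> z \<odot> x \<preceq> z \<odot> y"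
  unfolding rle_def by (metis distL)

lemma cv_meet: "cv (x \<otimes> y) = cv x \<otimes> cv y"
proof (rule H.le_antisym)
  show "cv (x \<otimes> y) \<preceq> cv x \<otimes> cv y"
    by (rule H.meet_greatest; rule cv_mono; simp)
  have "cv (cv x \<otimes> cv y) \<preceq> x \<otimes> y"
  proof (rule H.meet_greatest)
    show "cv (cv x \<otimes> cv y) \<preceq> x" using cv_mono[OF H.meet_le1[of "cv x" "cv y"]] by (simp add: cc)
    show "cv (cv x \<otimes> cv y) \<preceq> y" using cv_mono[OF H.meet_le2[of "cv x" "cv y"]] by (simp add: cc)
  qed
  from cv_mono[OF this] show "cv x \<otimes> cv y \<preceq> cv (x \<otimes> y)" by (simp add: cc)
qed

lemma cv_bot: "cv botr = botr"
proof -
  have "botr \<preceq> cv botr" by simp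
  from cv_mono[OF this] have "cv botr \<preceq> botr" by (simp add: cc)
  thus ?thesis by (rule H.bot_unique)
qed

lemma cv_eq_bot: "cv x = botr \<longleftrightarrow> x = botr"
  by (metis cv_bot cc)

lemma cv_top: "cv topr = topr"
proof -
  have "cv topr \<preceq> topr" by simp
  from cv_mono[OF this] have "topr \<preceq> cv topr" by (simp add: cc)
  thus ?thesis by (rule H.top_unique)
qed

lemma cyc1: "(x \<odot> y) \<otimes> z = botr \<Longrightarrow> (cv x \<odot> z) \<otimes> y = botr"
proof -
  assume "(x \<odot> y) \<otimes> z = botr"
  hence "z \<otimes> (x \<odot> y) = botr" by (simp add: H.m_comm)
  hence "z \<preceq> nc (x \<odot> y)" by (simp add: H.shunt)
  hence "cv x \<odot> z \<preceq> cv x \<odot> nc (x \<odot> y)" by (rule monoR)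
  hence "cv x \<odot> z \<preceq> nc y" using schr H.le_trans by blast
  thus ?thesis by (simp add: H.shunt)
qed

lemma cyc1_iff: "(x \<odot> y) \<otimes> z = botr \<longleftrightarrow> (cv x \<odot> z) \<otimes> y = botr"
  using cyc1[of x y z] cyc1[of "cv x" z y] by (auto simp: cc)

lemma cyc3: "(x \<odot> y) \<otimes> z = botr \<Longrightarrow> (z \<odot> cv y) \<otimes> x = botr"
proof -
  assume "(x \<odot> y) \<otimes> z = botr"
  hence "cv ((x \<odot> y) \<otimes> z) = botr" by (simp add: cv_bot)
  hence "(cv y \<odot> cv x) \<otimes> cv z = botr" by (simp add: cv_meet cv_comp)
  hence "(cv (cv y) \<odot> cv z) \<otimes> cv x = botr" by (rule cyc1)
  hence "(y \<odot> cv z) \<otimes> cv x = botr" by (simp only: cc)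
  hence "cv ((y \<odot> cv z) \<otimes> cv x) = botr" by (simp add: cv_bot)
  thus ?thesis by (simp add: cv_meet cv_comp cc)
qed

lemma cyc3_iff: "(x \<odot> y) \<otimes> z = botr \<longleftrightarrow> (z \<odot> cv y) \<otimes> x = botr"
  using cyc3[of x y z] cyc3[of z "cv y" x] by (auto simp: cc)

lemma atom_def': "ra_atom A a \<longleftrightarrow> a \<noteq> botr \<and> (\<forall>y. y \<preceq> a \<longrightarrow> y = botr \<or> y = a)"
  by (simp add: ra_atom_def)

lemma atom_meet: "ra_atom A a \<Longrightarrow> x \<otimes> a \<noteq> botr \<Longrightarrow> a \<preceq> x"
proof -
  assume a: "ra_atom A a" and n: "x \<otimes> a \<noteq> botr"
  have "x \<otimes> a \<preceq> a" by simp
  hence "x \<otimes> a = a" using a n unfolding atom_def' by blast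
  thus "a \<preceq> x" using H.meet_le1[of x a] by simp
qed

lemma atom_le: "ra_atom A a \<Longrightarrow> ra_atom A b \<Longrightarrow> a \<preceq> b \<Longrightarrow> a = b"
  unfolding atom_def' by blast

lemma atom_cv: "ra_atom A a \<Longrightarrow> ra_atom A (cv a)"
proof -
  assume a: "ra_atom A a"
  have "cv a \<noteq> botr" using a cv_eq_bot unfolding atom_def' by blast
  moreover have "y = botr \<or> y = cv a" if "y \<preceq> cv a" for y
  proof -
    have "cv y \<preceq> a" using cv_mono[OF that] by (simp add: cc)
    hence "cv y = botr \<or> cv y = a" using a unfolding atom_def' by blast
    thus ?thesis using cv_eq_bot cc by metis
  qed
  ultimately show ?thesis unfolding atom_def' by blast
qed

lemma sub_compL: "e \<preceq> idr \<Longrightarrow> e \<odot> x \<preceq> x"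
  using monoL[of e idr x] by (simp add: idL)

lemma sub_compR: "e \<preceq> idr \<Longrightarrow> x \<odot> e \<preceq> x"
  using monoR[of e idr x] by (simp add: idR)

lemma sub_cv: "e \<preceq> idr \<Longrightarrow> cv e = e"
proof -
  assume e: "e \<preceq> idr"
  have ce: "cv e \<preceq> idr" using cv_mono[OF e] by (simp add: cv_id)
  define w where "w = cv e \<otimes> nc e"
  have w1: "w \<preceq> idr" unfolding w_def by (rule H.le_meetI1[OF ce])
  have cw: "cv w \<preceq> idr" using cv_mono[OF w1] by (simp add: cv_id)
  have "w = botr"
  proof (rule ccontr)
    assume wn: "w \<noteq> botr"
    have "(w \<odot> idr) \<otimes> w \<noteq> botr" using wn by (simp add: idR)
    hence "(cv w \<odot> w) \<otimes> idr \<noteq> botr" using cyc1_iff by blast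
    hence ne: "cv w \<odot> w \<noteq> botr" by auto
    have "cv w \<odot> w \<preceq> cv w" by (rule sub_compR[OF w1])
    also have "cv w \<preceq> cv (cv e)" unfolding w_def by (rule cv_mono) simp
    finally have a: "cv w \<odot> w \<preceq> e" by (simp add: cc)
    have "cv w \<odot> w \<preceq> w" by (rule sub_compL[OF cw])
    also have "w \<preceq> nc e" unfolding w_def by simp
    finally have "cv w \<odot> w \<preceq> e \<otimes> nc e" by (rule H.meet_greatest[OF a])
    hence "cv w \<odot> w \<preceq> botr" by (simp add: H.meet_compl)
    hence "cv w \<odot> w = botr" by (rule H.bot_unique)
    thus False using ne by simp
  qed
  hence "cv e \<preceq> e" unfolding w_def by (rule H.key)
  moreover from cv_mono[OF this] have "e \<preceq> cv e" by (simp add: cc)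
  ultimately show ?thesis by (rule H.le_antisym)
qed

lemma sub_sub: "e \<preceq> idr \<Longrightarrow> f \<preceq> idr \<Longrightarrow> e \<odot> f \<preceq> e \<otimes> f"
  by (rule H.meet_greatest[OF sub_compR sub_compL])

lemma disj: "e \<preceq> idr \<Longrightarrow> f \<preceq> idr \<Longrightarrow> e \<otimes> f = botr \<Longrightarrow> (e \<odot> topr) \<otimes> (f \<odot> topr) = botr"
proof -
  assume e: "e \<preceq> idr" and f: "f \<preceq> idr" and ef: "e \<otimes> f = botr"
  have "e \<odot> f \<preceq> botr" using sub_sub[OF e f] ef by simp
  hence "e \<odot> f = botr" by (rule H.bot_unique)
  hence "(cv e \<odot> f) \<otimes> topr = botr" using sub_cv[OF e] by simp
  hence a: "(e \<odot> topr) \<otimes> f = botr" using cyc1_iff by blast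
  have "e \<otimes> idr = e" using e by (rule H.absorb_l)
  hence "(e \<odot> topr) \<odot> topr = e \<odot> topr" using wassoc[of e] by simp
  hence "((e \<odot> topr) \<odot> topr) \<otimes> f = botr" using a by simp
  hence "(f \<odot> cv topr) \<otimes> (e \<odot> topr) = botr" by (rule cyc3)
  thus ?thesis by (simp add: cv_top H.m_comm)
qed

lemma dom_aux: "ra_atom A a \<Longrightarrow> y \<preceq> a \<odot> cv a \<Longrightarrow> y \<noteq> botr \<Longrightarrow> a \<preceq> y \<odot> a"
proof -
  assume a: "ra_atom A a" and y: "y \<preceq> a \<odot> cv a" and yn: "y \<noteq> botr"
  have "(a \<odot> cv a) \<otimes> y = y" using y by (rule H.absorb_r)
  hence "(a \<odot> cv a) \<otimes> y \<noteq> botr" using yn by simp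
  hence "(y \<odot> a) \<otimes> a \<noteq> botr" using cyc3_iff[of y a a] by simp
  thus ?thesis by (rule atom_meet[OF a])
qed

lemma dom_atom: "ra_atom A a \<Longrightarrow> ra_atom A (rdom A a) \<and> a \<preceq> rdom A a \<odot> a"
proof -
  assume a: "ra_atom A a"
  let ?d = "rdom A a"
  have dd: "?d = (a \<odot> cv a) \<otimes> idr" by (simp add: rdom_def)
  have an: "a \<noteq> botr" using a atom_def' by blast
  have dn: "?d \<noteq> botr"
  proof
    assume "?d = botr"
    hence "(a \<odot> cv a) \<otimes> idr = botr" using dd by simp
    hence "(idr \<odot> cv (cv a)) \<otimes> a = botr" by (rule cyc3)
    thus False using an by (simp add: idL cc)
  qed
  have d1: "?d \<preceq> a \<odot> cv a" using dd by simp
  have d2: "?d \<preceq> idr" using dd by simp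
  have main: "y \<preceq> ?d \<Longrightarrow> y \<noteq> botr \<Longrightarrow> y = ?d" for y
  proof -
    assume y: "y \<preceq> ?d" and yn: "y \<noteq> botr"
    define f where "f = ?d \<otimes> nc y"
    have "f = botr"
    proof (rule ccontr)
      assume fn: "f \<noteq> botr"
      have fd: "f \<preceq> ?d" unfolding f_def by simp
      have "a \<preceq> y \<odot> a" by (rule dom_aux[OF a _ yn]) (rule H.le_trans[OF y d1])
      also have "y \<odot> a \<preceq> y \<odot> topr" by (rule monoR) simp
      finally have ay: "a \<preceq> y \<odot> topr" .
      have "a \<preceq> f \<odot> a" by (rule dom_aux[OF a _ fn]) (rule H.le_trans[OF fd d1])
      also have "f \<odot> a \<preceq> f \<odot> topr" by (rule monoR) simp
      finally have af: "a \<preceq> f \<odot> topr" .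
      have yi: "y \<preceq> idr" by (rule H.le_trans[OF y d2])
      have fi: "f \<preceq> idr" by (rule H.le_trans[OF fd d2])
      have "y \<otimes> f = botr"
      proof -
        have "y \<otimes> (?d \<otimes> nc y) \<preceq> y \<otimes> nc y"
          by (rule H.meet_greatest[OF H.meet_le1 H.le_meetI2[OF H.meet_le2]])
        hence "y \<otimes> (?d \<otimes> nc y) \<preceq> botr" by (simp add: H.meet_compl)
        thus ?thesis unfolding f_def by (rule H.bot_unique)
      qed
      hence "(y \<odot> topr) \<otimes> (f \<odot> topr) = botr" by (rule disj[OF yi fi])
      moreover have "a \<preceq> (y \<odot> topr) \<otimes> (f \<odot> topr)" by (rule H.meet_greatest[OF ay af])
      ultimately have "a \<preceq> botr" by simp
      thus False using an H.bot_unique by blast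
    qed
    hence "?d \<preceq> y" unfolding f_def by (rule H.key)
    thus "y = ?d" using y by (rule H.le_antisym[rotated])
  qed
  have "ra_atom A ?d" unfolding atom_def' using dn main by blast
  moreover have "a \<preceq> ?d \<odot> a" by (rule dom_aux[OF a d1 dn])
  ultimately show ?thesis by blast
qed

lemma ran_atom: "ra_atom A a \<Longrightarrow> ra_atom A (rran A a) \<and> a \<preceq> a \<odot> rran A a"
proof -
  assume a: "ra_atom A a"
  have r: "rran A a = rdom A (cv a)" by (simp add: rran_def rdom_def cc)
  have ca: "ra_atom A (cv a)" by (rule atom_cv[OF a])
  from dom_atom[OF ca] have ra: "ra_atom A (rran A a)" and le: "cv a \<preceq> rran A a \<odot> cv a"
    by (simp_all add: r)
  have ri: "rran A a \<preceq> idr" by (simp add: rran_def)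
  from cv_mono[OF le] have "a \<preceq> a \<odot> cv (rran A a)" by (simp add: cv_comp cc)
  thus ?thesis using ra sub_cv[OF ri] by simp
qed

lemma dom_unique: "ra_atom A a \<Longrightarrow> ra_atom A e \<Longrightarrow> e \<preceq> idr \<Longrightarrow> a \<preceq> e \<odot> a \<Longrightarrow> e = rdom A a"
proof -
  assume a: "ra_atom A a" and e: "ra_atom A e" and ei: "e \<preceq> idr" and le: "a \<preceq> e \<odot> a"
  have an: "a \<noteq> botr" using a atom_def' by blast
  have "(e \<odot> a) \<otimes> a = a" using le by (rule H.absorb_r)
  hence "(e \<odot> a) \<otimes> a \<noteq> botr" using an by simp
  hence "(a \<odot> cv a) \<otimes> e \<noteq> botr" using cyc3_iff[of e a a] by simp
  hence "e \<preceq> a \<odot> cv a" by (rule atom_meet[OF e])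
  hence "e \<preceq> rdom A a" unfolding rdom_def by (rule H.meet_greatest[OF _ ei])
  thus ?thesis using e dom_atom[OF a] atom_le by blast
qed

lemma ran_unique: "ra_atom A a \<Longrightarrow> ra_atom A e \<Longrightarrow> e \<preceq> idr \<Longrightarrow> a \<preceq> a \<odot> e \<Longrightarrow> e = rran A a"
proof -
  assume a: "ra_atom A a" and e: "ra_atom A e" and ei: "e \<preceq> idr" and le: "a \<preceq> a \<odot> e"
  have an: "a \<noteq> botr" using a atom_def' by blast
  have "(a \<odot> e) \<otimes> a = a" using le by (rule H.absorb_r)
  hence "(a \<odot> e) \<otimes> a \<noteq> botr" using an by simp
  hence "(cv a \<odot> a) \<otimes> e \<noteq> botr" using cyc1_iff[of a e a] by simp
  hence "e \<preceq> cv a \<odot> a" by (rule atom_meet[OF e])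
  hence "e \<preceq> rran A a" unfolding rran_def by (rule H.meet_greatest[OF _ ei])
  thus ?thesis using e ran_atom[OF a] atom_le by blast
qed


lemma memB: "(x, y, z) \<in> suitB A \<longleftrightarrow> ra_atom A x \<and> ra_atom A y \<and> ra_atom A z \<and> y \<preceq> z \<odot> x"
  by (simp add: suitB_def At_def)

lemma memE: "s \<in> suitE A k l \<longleftrightarrow> s \<in> suitB A \<and> (k \<noteq> l \<longrightarrow> sel (3 - k - l) s \<preceq> idr)"
  by (simp add: suitE_def)

lemma memT: "s \<in> Tstar A k {t} \<longleftrightarrow> s \<in> suitB A \<and> t \<in> suitB A \<and> sel k s = sel k t"
  by (auto simp: Tstar_def suitT_def)

lemma sel_simps: "sel 0 (x, y, z) = x" "sel 1 (x, y, z) = y" "sel 2 (x, y, z) = z"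
  by (simp_all add: sel_def)

lemma rdom_le: "rdom A a \<preceq> idr" "rdom A a \<preceq> a \<odot> cv a" by (simp_all add: rdom_def)
lemma rran_le: "rran A a \<preceq> idr" "rran A a \<preceq> cv a \<odot> a" by (simp_all add: rran_def)

lemma atom_nz: "ra_atom A a \<Longrightarrow> a \<noteq> botr" by (simp add: atom_def')

lemma part1:
  assumes t: "(t0, t1, t2) \<in> suitB A"
  shows "suitE A 1 0 \<inter> Tstar A 0 {(t0, t1, t2)} = {(t0, t0, rdom A t0)}"
proof (intro equalityI subsetI)
  have t0a: "ra_atom A t0" using t by (simp add: memB)
  fix s assume s: "s \<in> suitE A 1 0 \<inter> Tstar A 0 {(t0, t1, t2)}"
  obtain s0 s1 s2 where se: "s = (s0, s1, s2)" by (cases s) auto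
  from s have "s0 = t0 \<and> ra_atom A s1 \<and> ra_atom A s2 \<and> s1 \<preceq> s2 \<odot> s0 \<and> s2 \<preceq> idr"
    by (auto simp add: se memE memT memB sel_def)
  hence s0: "s0 = t0" and a1: "ra_atom A s1" and a2: "ra_atom A s2"
    and le: "s1 \<preceq> s2 \<odot> s0" and e: "s2 \<preceq> idr" by blast+
  have "s1 \<preceq> t0" using H.le_trans[OF le sub_compL[OF e]] s0 by simp
  hence s1: "s1 = t0" by (rule atom_le[OF a1 t0a])
  have "s2 = rdom A t0" by (rule dom_unique[OF t0a a2 e]) (use le s0 s1 in simp)
  thus "s \<in> {(t0, t0, rdom A t0)}" using se s0 s1 by simp
next
  have t0a: "ra_atom A t0" using t by (simp add: memB)
  fix s assume "s \<in> {(t0, t0, rdom A t0)}"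
  hence se: "s = (t0, t0, rdom A t0)" by simp
  show "s \<in> suitE A 1 0 \<inter> Tstar A 0 {(t0, t1, t2)}"
    using dom_atom[OF t0a] t0a t rdom_le by (simp add: se memE memT memB sel_def)
qed

lemma part2:
  assumes t: "(t0, t1, t2) \<in> suitB A"
  shows "suitE A 0 1 \<inter> Tstar A 1 {(t0, t1, t2)} = {(t1, t1, rdom A t1)}"
proof (intro equalityI subsetI)
  have t1a: "ra_atom A t1" using t by (simp add: memB)
  fix s assume s: "s \<in> suitE A 0 1 \<inter> Tstar A 1 {(t0, t1, t2)}"
  obtain s0 s1 s2 where se: "s = (s0, s1, s2)" by (cases s) auto
  from s have "s1 = t1 \<and> ra_atom A s0 \<and> ra_atom A s2 \<and> s1 \<preceq> s2 \<odot> s0 \<and> s2 \<preceq> idr"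
    by (auto simp add: se memE memT memB sel_def)
  hence s1: "s1 = t1" and a0: "ra_atom A s0" and a2: "ra_atom A s2"
    and le: "s1 \<preceq> s2 \<odot> s0" and e: "s2 \<preceq> idr" by blast+
  have "t1 \<preceq> s0" using H.le_trans[OF le sub_compL[OF e]] s1 by simp
  hence s0: "s0 = t1" using atom_le[OF t1a a0] by simp
  have "s2 = rdom A t1" by (rule dom_unique[OF t1a a2 e]) (use le s0 s1 in simp)
  thus "s \<in> {(t1, t1, rdom A t1)}" using se s0 s1 by simp
next
  have t1a: "ra_atom A t1" using t by (simp add: memB)
  fix s assume "s \<in> {(t1, t1, rdom A t1)}"
  hence se: "s = (t1, t1, rdom A t1)" by simp
  show "s \<in> suitE A 0 1 \<inter> Tstar A 1 {(t0, t1, t2)}"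
    using dom_atom[OF t1a] t1a t rdom_le by (simp add: se memE memT memB sel_def)
qed

lemma part3:
  assumes t: "(t0, t1, t2) \<in> suitB A"
  shows "suitE A 1 2 \<inter> Tstar A 2 {(t0, t1, t2)} = {(rran A t2, t2, t2)}"
proof (intro equalityI subsetI)
  have t2a: "ra_atom A t2" using t by (simp add: memB)
  fix s assume s: "s \<in> suitE A 1 2 \<inter> Tstar A 2 {(t0, t1, t2)}"
  obtain s0 s1 s2 where se: "s = (s0, s1, s2)" by (cases s) auto
  from s have "s2 = t2 \<and> ra_atom A s0 \<and> ra_atom A s1 \<and> s1 \<preceq> s2 \<odot> s0 \<and> s0 \<preceq> idr"
    by (auto simp add: se memE memT memB sel_def)
  hence s2: "s2 = t2" and a0: "ra_atom A s0" and a1: "ra_atom A s1"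
    and le: "s1 \<preceq> s2 \<odot> s0" and e: "s0 \<preceq> idr" by blast+
  have "s1 \<preceq> t2" using H.le_trans[OF le sub_compR[OF e]] s2 by simp
  hence s1: "s1 = t2" by (rule atom_le[OF a1 t2a])
  have "s0 = rran A t2" by (rule ran_unique[OF t2a a0 e]) (use le s1 s2 in simp)
  thus "s \<in> {(rran A t2, t2, t2)}" using se s1 s2 by simp
next
  have t2a: "ra_atom A t2" using t by (simp add: memB)
  fix s assume "s \<in> {(rran A t2, t2, t2)}"
  hence se: "s = (rran A t2, t2, t2)" by simp
  show "s \<in> suitE A 1 2 \<inter> Tstar A 2 {(t0, t1, t2)}"
    using ran_atom[OF t2a] t2a t rran_le by (simp add: se memE memT memB sel_def)
qed

lemma part4:
  assumes t: "(t0, t1, t2) \<in> suitB A"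
  shows "suitE A 2 1 \<inter> Tstar A 1 {(t0, t1, t2)} = {(rran A t1, t1, t1)}"
proof (intro equalityI subsetI)
  have t1a: "ra_atom A t1" using t by (simp add: memB)
  fix s assume s: "s \<in> suitE A 2 1 \<inter> Tstar A 1 {(t0, t1, t2)}"
  obtain s0 s1 s2 where se: "s = (s0, s1, s2)" by (cases s) auto
  from s have "s1 = t1 \<and> ra_atom A s0 \<and> ra_atom A s2 \<and> s1 \<preceq> s2 \<odot> s0 \<and> s0 \<preceq> idr"
    by (auto simp add: se memE memT memB sel_def)
  hence s1: "s1 = t1" and a0: "ra_atom A s0" and a2: "ra_atom A s2"
    and le: "s1 \<preceq> s2 \<odot> s0" and e: "s0 \<preceq> idr" by blast+
  have "t1 \<preceq> s2" using H.le_trans[OF le sub_compR[OF e]] s1 by simp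
  hence s2: "s2 = t1" using atom_le[OF t1a a2] by simp
  have "s0 = rran A t1" by (rule ran_unique[OF t1a a0 e]) (use le s1 s2 in simp)
  thus "s \<in> {(rran A t1, t1, t1)}" using se s1 s2 by simp
next
  have t1a: "ra_atom A t1" using t by (simp add: memB)
  fix s assume "s \<in> {(rran A t1, t1, t1)}"
  hence se: "s = (rran A t1, t1, t1)" by simp
  show "s \<in> suitE A 2 1 \<inter> Tstar A 1 {(t0, t1, t2)}"
    using ran_atom[OF t1a] t1a t rran_le by (simp add: se memE memT memB sel_def)
qed

lemma part5:
  assumes t: "(t0, t1, t2) \<in> suitB A"
  shows "suitE A 0 2 \<inter> Tstar A 2 {(t0, t1, t2)} = {(cv t2, rdom A t2, t2)}"
proof (intro equalityI subsetI)
  have t2a: "ra_atom A t2" using t by (simp add: memB)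
  fix s assume s: "s \<in> suitE A 0 2 \<inter> Tstar A 2 {(t0, t1, t2)}"
  obtain s0 s1 s2 where se: "s = (s0, s1, s2)" by (cases s) auto
  from s have "s2 = t2 \<and> ra_atom A s0 \<and> ra_atom A s1 \<and> s1 \<preceq> s2 \<odot> s0 \<and> s1 \<preceq> idr"
    by (auto simp add: se memE memT memB sel_def)
  hence s2: "s2 = t2" and a0: "ra_atom A s0" and a1: "ra_atom A s1"
    and le: "s1 \<preceq> s2 \<odot> s0" and e: "s1 \<preceq> idr" by blast+
  have "(t2 \<odot> s0) \<otimes> s1 = s1" using le s2 by (simp add: H.absorb_r)
  hence "(t2 \<odot> s0) \<otimes> s1 \<noteq> botr" using atom_nz[OF a1] by simp
  hence "(cv t2 \<odot> s1) \<otimes> s0 \<noteq> botr" using cyc1_iff[of t2 s0 s1] by simp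
  hence "s0 \<preceq> cv t2 \<odot> s1" by (rule atom_meet[OF a0])
  hence "s0 \<preceq> cv t2" using H.le_trans sub_compR[OF e] by blast
  hence s0: "s0 = cv t2" by (rule atom_le[OF a0 atom_cv[OF t2a]])
  have "s1 \<preceq> t2 \<odot> cv t2" using le s0 s2 by simp
  hence "s1 \<preceq> rdom A t2" unfolding rdom_def by (rule H.meet_greatest[OF _ e])
  hence s1: "s1 = rdom A t2" using atom_le[OF a1] dom_atom[OF t2a] by blast
  show "s \<in> {(cv t2, rdom A t2, t2)}" using se s0 s1 s2 by simp
next
  have t2a: "ra_atom A t2" using t by (simp add: memB)
  fix s assume "s \<in> {(cv t2, rdom A t2, t2)}"
  hence se: "s = (cv t2, rdom A t2, t2)" by simp
  show "s \<in> suitE A 0 2 \<inter> Tstar A 2 {(t0, t1, t2)}"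
    using dom_atom[OF t2a] atom_cv[OF t2a] t2a t rdom_le by (simp add: se memE memT memB sel_def)
qed

lemma part6:
  assumes t: "(t0, t1, t2) \<in> suitB A"
  shows "suitE A 2 0 \<inter> Tstar A 0 {(t0, t1, t2)} = {(t0, rran A t0, cv t0)}"
proof (intro equalityI subsetI)
  have t0a: "ra_atom A t0" using t by (simp add: memB)
  fix s assume s: "s \<in> suitE A 2 0 \<inter> Tstar A 0 {(t0, t1, t2)}"
  obtain s0 s1 s2 where se: "s = (s0, s1, s2)" by (cases s) auto
  from s have "s0 = t0 \<and> ra_atom A s2 \<and> ra_atom A s1 \<and> s1 \<preceq> s2 \<odot> s0 \<and> s1 \<preceq> idr"
    by (auto simp add: se memE memT memB sel_def)
  hence s0: "s0 = t0" and a2: "ra_atom A s2" and a1: "ra_atom A s1"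
    and le: "s1 \<preceq> s2 \<odot> s0" and e: "s1 \<preceq> idr" by blast+
  have "(s2 \<odot> t0) \<otimes> s1 = s1" using le s0 by (simp add: H.absorb_r)
  hence "(s2 \<odot> t0) \<otimes> s1 \<noteq> botr" using atom_nz[OF a1] by simp
  hence "(s1 \<odot> cv t0) \<otimes> s2 \<noteq> botr" using cyc3_iff[of s2 t0 s1] by simp
  hence "s2 \<preceq> s1 \<odot> cv t0" by (rule atom_meet[OF a2])
  hence "s2 \<preceq> cv t0" using H.le_trans sub_compL[OF e] by blast
  hence s2: "s2 = cv t0" by (rule atom_le[OF a2 atom_cv[OF t0a]])
  have "s1 \<preceq> cv t0 \<odot> t0" using le s0 s2 by simp
  hence "s1 \<preceq> rran A t0" unfolding rran_def by (rule H.meet_greatest[OF _ e])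
  hence s1: "s1 = rran A t0" using atom_le[OF a1] ran_atom[OF t0a] by blast
  show "s \<in> {(t0, rran A t0, cv t0)}" using se s0 s1 s2 by simp
next
  have t0a: "ra_atom A t0" using t by (simp add: memB)
  fix s assume "s \<in> {(t0, rran A t0, cv t0)}"
  hence se: "s = (t0, rran A t0, cv t0)" by simp
  show "s \<in> suitE A 2 0 \<inter> Tstar A 0 {(t0, t1, t2)}"
    using ran_atom[OF t0a] atom_cv[OF t0a] t0a t rran_le by (simp add: se memE memT memB sel_def)
qed

end

theorem lemma6:
  fixes A :: "'a ra" and t0 t1 t2 :: 'a
  assumes "WA A" and "ra_atomic A"
    and "(t0, t1, t2) \<in> suitB A"
  shows "suitE A 1 0 \<inter> Tstar A 0 {(t0, t1, t2)} = {(t0, t0, rdom A t0)} \<and>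
         suitE A 0 1 \<inter> Tstar A 1 {(t0, t1, t2)} = {(t1, t1, rdom A t1)} \<and>
         suitE A 1 2 \<inter> Tstar A 2 {(t0, t1, t2)} = {(rran A t2, t2, t2)} \<and>
         suitE A 2 1 \<inter> Tstar A 1 {(t0, t1, t2)} = {(rran A t1, t1, t1)} \<and>
         suitE A 0 2 \<inter> Tstar A 2 {(t0, t1, t2)} = {(rconv A t2, rdom A t2, t2)} \<and>
         suitE A 2 0 \<inter> Tstar A 0 {(t0, t1, t2)} = {(t0, rran A t0, rconv A t0)}"
proof -
  interpret W: wactx A by unfold_locales (rule assms(1))
  show ?thesis
    using W.part1[OF assms(3)] W.part2[OF assms(3)] W.part3[OF assms(3)]
      W.part4[OF assms(3)] W.part5[OF assms(3)] W.part6[OF assms(3)] by blast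
qed

end
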